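(* Let $m,k\in\mathbb{N}$ and let $\beta,\gamma\in\mathbb{C}$ with $\beta-k-1,\ -m-k-\gamma,\ \beta-\gamma-m-k\notin\mathbb{Z}_0^-$. Then \[ {}_3F_2\left[\begin{array}{r} -m,\ \beta-k-1,\ -m-k-\gamma;\\ -m-k,\ \beta-\gamma-m-k;\end{array}1\right]_m=\frac{\left(\beta\right)_m\left(\gamma\right)_m}{\left(1+k\right)_m\left(1+k+\gamma-\beta\right)_m}. \]
   Context: $\mathbb{N}=\{1,2,3,\dots\}$, $\mathbb{Z}_0^-=\{0,-1,-2,\dots\}$. For $a\in\mathbb{C}$ and $n\in\mathbb{N}_0$, $(a)_0=1$ and $(a)_n=a(a+1)\cdots(a+n-1)$. For $N\in\mathbb{N}_0$, ${}_3F_2\left[\begin{array}{r} a_1,a_2,a_3;\\ b_1,b_2;\end{array}z\right]_N=\sum_{n=0}^{N}\frac{(a_1)_n(a_2)_n(a_3)_n}{(b_1)_n(b_2)_n}\frac{z^n}{n!}$ (the sum of the first $N+1$ terms), defined whenever $(b_1)_n(b_2)_n\neq0$ for $0\le n\le N$. *)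

theory Defs
  imports "HOL-Analysis.Analysis"
begin

definition hyp3F2_trunc ::
  "complex \<Rightarrow> complex \<Rightarrow> complex \<Rightarrow> complex \<Rightarrow> complex \<Rightarrow> complex \<Rightarrow> nat \<Rightarrow> complex" where
  "hyp3F2_trunc a1 a2 a3 b1 b2 z N =
     (\<Sum>n=0..N. pochhammer a1 n * pochhammer a2 n * pochhammer a3 n /
                 (pochhammer b1 n * pochhammer b2 n) * z ^ n / of_nat (fact n))"

end

theory Submission
  imports Defs
begin

definition tt :: "nat \<Rightarrow> complex \<Rightarrow> complex \<Rightarrow> complex \<Rightarrow> nat \<Rightarrow> complex" where
"tt n a b c j = pochhammer (- of_nat n) j * pochhammer a j * pochhammer b j /
   (pochhammer c j * pochhammer (1 + a + b - c - of_nat n) j * fact j)"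

lemma poch_shift: "(z::complex) * pochhammer (z+1) j = pochhammer z j * (z + of_nat j)"
  by (metis pochhammer_Suc pochhammer_rec)

lemma core:
  fixes a b c N J :: complex
  assumes "c + J \<noteq> 0" "a + b - c - N + J \<noteq> 0" "a + b - c - N \<noteq> 0" "c + N \<noteq> 0" "N + 1 \<noteq> 0" "J + 1 \<noteq> 0"
  shows "1 - (c-a+N)*(c-b+N)/((c+N)*(c-a-b+N)) * ((N + 1 - J) * (a + b - c - N) / ((N + 1) * (a + b - c - N + J)))
    = - (((- N - 1 + J) * (a + J) * (b + J)) / ((c + J) * (a + b - c - N + J) * (J + 1))) * (J + 1) * (c + J)/((N+1)*(c+N))
      - (- J * (c + J - 1)/((N+1)*(c+N)))"
proof -
  have e: "c - a - b + N \<noteq> 0" using assms(3) by (metis add_diff_cancel_left' diff_add_cancel diff_diff_eq2 minus_diff_eq neg_equal_0_iff_equal)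
  show ?thesis using assms e apply (simp add: divide_simps) by algebra
qed

lemma step_j:
  fixes a b c :: complex
  assumes jn: "j \<le> n"
    and hc: "\<forall>i<Suc n. c + of_nat i \<noteq> 0"
    and he: "\<forall>i<Suc n. c - a - b + of_nat i \<noteq> 0"
  defines "\<rho> \<equiv> (c - a + of_nat n)*(c - b + of_nat n)/((c + of_nat n)*(c - a - b + of_nat n))"
  defines "G \<equiv> (\<lambda>j. - tt (Suc n) a b c j * of_nat j * (c + of_nat j - 1)/((of_nat n + 1)*(c + of_nat n)))"
  shows "tt (Suc n) a b c j - \<rho> * tt n a b c j = G (Suc j) - G j"
proof -
  define N where "N = (of_nat n :: complex)"
  define d where "d = 1 + a + b - c - N"
  define A where "A = (pochhammer (- of_nat (Suc n)) j :: complex)"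
  define C where "C = pochhammer c j"
  define D where "D = pochhammer (d-1) j"
  define Bb where "Bb = pochhammer a j * pochhammer b j"
  define X where "X = A*Bb/(C*D*fact j)"
  have C0: "C \<noteq> 0" unfolding C_def pochhammer_eq_0_iff
  proof
    assume "\<exists>k<j. c = - of_nat k"
    then obtain k where k: "k < j" "c = - of_nat k" by blast
    then have "c + of_nat k = 0" by simp
    moreover have "k < Suc n" using k jn by simp
    ultimately show False using hc by blast
  qed
  have key: "c - a - b + of_nat (n - k) = - (d - 1 + of_nat k)" if "k \<le> n" for k
    using that by (simp add: of_nat_diff d_def N_def algebra_simps)
  have D0: "D \<noteq> 0" unfolding D_def pochhammer_eq_0_iff
  proof
    assume "\<exists>k<j. d - 1 = - of_nat k"
    then obtain k where k: "k < j" "d - 1 = - of_nat k" by blast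
    have "c - a - b + of_nat (n - k) = 0" using k jn key[of k] by simp
    moreover have "n - k < Suc n" by simp
    ultimately show False using he by blast
  qed
  have cj: "c + of_nat j \<noteq> 0" using hc jn by auto
  have dj: "d - 1 + of_nat j \<noteq> 0"
  proof
    assume "d - 1 + of_nat j = 0"
    then have "c - a - b + of_nat (n - j) = 0" using jn key[of j] by simp
    moreover have "n - j < Suc n" by simp
    ultimately show False using he by blast
  qed
  have d1: "d - 1 \<noteq> 0" using key[of 0] he by auto
  have cN: "c + N \<noteq> 0" using hc N_def by auto
  have eN: "c - a - b + N \<noteq> 0" using he N_def by auto
  have N1: "N + 1 \<noteq> 0" unfolding N_def
    by (metis of_nat_Suc of_nat_eq_0_iff add.commute nat.distinct(1))
  have f0: "(fact j :: complex) \<noteq> 0" by simp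
  have T: "tt (Suc n) a b c j = X"
    unfolding tt_def X_def A_def Bb_def C_def D_def d_def N_def by (simp add: algebra_simps)
  have j1: "(of_nat j + 1 :: complex) \<noteq> 0" by (metis of_nat_Suc of_nat_eq_0_iff add.commute nat.distinct(1))
  have T1: "tt (Suc n) a b c (Suc j) = X * ((- N - 1 + of_nat j) * (a + of_nat j) * (b + of_nat j))
      / ((c + of_nat j) * (d - 1 + of_nat j) * (of_nat j + 1))"
  proof -
    have "tt (Suc n) a b c (Suc j) = (A * (- N - 1 + of_nat j)) * (pochhammer a j * (a + of_nat j)) * (pochhammer b j * (b + of_nat j))
       / ((C * (c + of_nat j)) * (D * (d - 1 + of_nat j)) * ((of_nat j + 1) * fact j))"
      unfolding tt_def A_def C_def D_def d_def N_def pochhammer_Suc fact_Suc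
      by (simp add: algebra_simps)
    also have "\<dots> = X * ((- N - 1 + of_nat j) * (a + of_nat j) * (b + of_nat j))
      / ((c + of_nat j) * (d - 1 + of_nat j) * (of_nat j + 1))"
      unfolding X_def Bb_def by (simp add: mult_ac)
    finally show ?thesis .
  qed
  have sA: "pochhammer (- N) j = A * (N + 1 - of_nat j) / (N + 1)"
  proof -
    have h: "(- N - 1) * pochhammer (- N) j = A * (- N - 1 + of_nat j)"
    proof -
      have "- of_nat (Suc n) = -N-1" unfolding N_def by simp
      then have Aeq: "A = pochhammer (-N-1) j" unfolding A_def by (simp only:)
      have e: "(-N-1)+1 = -N" by simp
      show ?thesis using poch_shift[of "-N-1" j] unfolding e Aeq .
    qed
    have "(N + 1) * pochhammer (- N) j = A * (N + 1 - of_nat j)"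
      using arg_cong[OF h, of uminus] by (simp add: algebra_simps)
    then show ?thesis using N1 by (simp add: eq_divide_eq mult.commute)
  qed
  have sD: "pochhammer d j = D * (d - 1 + of_nat j) / (d - 1)"
  proof -
    have h: "(d - 1) * pochhammer d j = D * (d - 1 + of_nat j)"
      using poch_shift[of "d-1" j] unfolding D_def by simp
    then show ?thesis using d1 by (simp add: eq_divide_eq mult.commute)
  qed
  have t0: "tt n a b c j = X * (N + 1 - of_nat j) * (d - 1) / ((N + 1) * (d - 1 + of_nat j))"
  proof -
    have "tt n a b c j = pochhammer (- N) j * Bb / (C * pochhammer d j * fact j)"
      unfolding tt_def Bb_def C_def d_def N_def by (simp add: mult.assoc)
    also have "\<dots> = X * (N + 1 - of_nat j) * (d - 1) / ((N + 1) * (d - 1 + of_nat j))"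
      unfolding sA sD X_def using C0 D0 d1 dj N1 f0 by (simp add: field_simps)
    finally show ?thesis .
  qed
  have Gj: "G j = - X * of_nat j * (c + of_nat j - 1)/((N+1)*(c+N))"
    unfolding G_def T N_def by (simp add: algebra_simps)
  have GSj: "G (Suc j) = - (X * ((- N - 1 + of_nat j) * (a + of_nat j) * (b + of_nat j))
      / ((c + of_nat j) * (d - 1 + of_nat j) * (of_nat j + 1))) * (of_nat j + 1) * (c + of_nat j)/((N+1)*(c+N))"
    unfolding G_def T1 N_def by (simp add: algebra_simps)
  have rho: "\<rho> = (c-a+N)*(c-b+N)/((c+N)*(c-a-b+N))" unfolding \<rho>_def N_def ..
  have e1: "c - a - b + N = 1 - d" unfolding d_def by simp
  have dd: "d - 1 = a + b - c - N" by (simp add: d_def)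
  have cr: "X * (1 - (c-a+N)*(c-b+N)/((c+N)*(c-a-b+N)) * ((N + 1 - of_nat j) * (a + b - c - N) / ((N + 1) * (a + b - c - N + of_nat j))))
    = X * (- (((- N - 1 + of_nat j) * (a + of_nat j) * (b + of_nat j)) / ((c + of_nat j) * (a + b - c - N + of_nat j) * (of_nat j + 1))) * (of_nat j + 1) * (c + of_nat j)/((N+1)*(c+N))
      - (- of_nat j * (c + of_nat j - 1)/((N+1)*(c+N))))"
    using core[of c "of_nat j" a b N] cj dj d1 cN N1 j1 unfolding dd by simp
  show ?thesis
    unfolding T t0 Gj GSj rho dd using cr
    by (simp add: algebra_simps)
qed
lemma saal:
  fixes a b c :: complex
  assumes "\<forall>i<n. c + of_nat i \<noteq> 0" "\<forall>i<n. c - a - b + of_nat i \<noteq> 0"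
  shows "(\<Sum>j=0..n. tt n a b c j) = pochhammer (c-a) n * pochhammer (c-b) n / (pochhammer c n * pochhammer (c-a-b) n)"
  using assms
proof (induction n)
  case 0
  then show ?case by (simp add: tt_def)
next
  case (Suc n)
  have hc: "\<forall>i<Suc n. c + of_nat i \<noteq> 0" and he: "\<forall>i<Suc n. c - a - b + of_nat i \<noteq> 0" using Suc.prems by auto
  have IH: "(\<Sum>j=0..n. tt n a b c j) = pochhammer (c-a) n * pochhammer (c-b) n / (pochhammer c n * pochhammer (c-a-b) n)"
    using Suc.IH hc he by auto
  define \<rho> where "\<rho> = (c - a + of_nat n)*(c - b + of_nat n)/((c + of_nat n)*(c - a - b + of_nat n))"
  define G where "G = (\<lambda>j. - tt (Suc n) a b c j * of_nat j * (c + of_nat j - 1)/((of_nat n + 1)*(c + of_nat n)))"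
  have cN: "c + of_nat n \<noteq> 0" using hc by auto
  have N1: "(of_nat n + 1 :: complex) \<noteq> 0" by (metis of_nat_Suc of_nat_eq_0_iff add.commute nat.distinct(1))
  have "(\<Sum>j=0..n. tt (Suc n) a b c j - \<rho> * tt n a b c j) = (\<Sum>j=0..n. G (Suc j) - G j)"
    by (rule sum.cong) (use step_j[OF _ hc he] in \<open>auto simp: \<rho>_def G_def\<close>)
  also have "\<dots> = G (Suc n) - G 0" by (rule sum_Suc_diff) simp
  also have "\<dots> = - tt (Suc n) a b c (Suc n)" unfolding G_def using cN N1 by (simp add: divide_simps)
  finally have tel: "(\<Sum>j=0..n. tt (Suc n) a b c j) - \<rho> * (\<Sum>j=0..n. tt n a b c j) = - tt (Suc n) a b c (Suc n)"
    by (simp add: sum_subtractf sum_distrib_left)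
  have "(\<Sum>j=0..Suc n. tt (Suc n) a b c j) = \<rho> * (\<Sum>j=0..n. tt n a b c j)"
    using tel by (simp add: sum.atLeast0_atMost_Suc algebra_simps)
  also have "\<dots> = pochhammer (c-a) (Suc n) * pochhammer (c-b) (Suc n) / (pochhammer c (Suc n) * pochhammer (c-a-b) (Suc n))"
    unfolding IH \<rho>_def pochhammer_Suc by (simp add: mult_ac)
  finally show ?case .
qed


theorem mainTheorem4:
  fixes m k :: nat and \<beta> \<gamma> :: complex
  assumes "m \<ge> 1" and "k \<ge> 1"
    and "\<beta> - of_nat k - 1 \<notin> \<int>\<^sub>\<le>\<^sub>0"
    and "- of_nat m - of_nat k - \<gamma> \<notin> \<int>\<^sub>\<le>\<^sub>0"
    and "\<beta> - \<gamma> - of_nat m - of_nat k \<notin> \<int>\<^sub>\<le>\<^sub>0"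
  shows "hyp3F2_trunc (- of_nat m) (\<beta> - of_nat k - 1) (- of_nat m - of_nat k - \<gamma>)
            (- of_nat m - of_nat k) (\<beta> - \<gamma> - of_nat m - of_nat k) 1 m
         = pochhammer \<beta> m * pochhammer \<gamma> m /
           (pochhammer (1 + of_nat k) m * pochhammer (1 + of_nat k + \<gamma> - \<beta>) m)"
proof -
  define a where "a = \<beta> - of_nat k - 1"
  define b where "b = - of_nat m - of_nat k - \<gamma>"
  define c where "c = - of_nat m - (of_nat k :: complex)"
  have h1: "\<forall>i<m. c + of_nat i \<noteq> 0"
  proof (intro allI impI)
    fix i assume "i < m"
    then have "of_nat i \<noteq> (of_nat (m + k) :: complex)" by (metis of_nat_eq_iff less_add_same_cancel1 not_add_less1 trans_less_add1 nat_neq_iff)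
    then show "c + of_nat i \<noteq> 0" unfolding c_def by (auto simp: algebra_simps)
  qed
  have h2: "\<forall>i<m. c - a - b + of_nat i \<noteq> 0"
  proof (intro allI impI)
    fix i assume i: "i < m"
    show "c - a - b + of_nat i \<noteq> 0"
    proof
      assume z: "c - a - b + of_nat i = 0"
      have "\<beta> - \<gamma> - of_nat m - of_nat k = - of_nat (m - 1 - i)"
        using z i unfolding a_def b_def c_def by (simp add: of_nat_diff algebra_simps)
      then show False using assms(5) by simp
    qed
  qed
  have S: "hyp3F2_trunc (- of_nat m) (\<beta> - of_nat k - 1) (- of_nat m - of_nat k - \<gamma>)
            (- of_nat m - of_nat k) (\<beta> - \<gamma> - of_nat m - of_nat k) 1 m = (\<Sum>j=0..m. tt m a b c j)"
  proof -
    have e: "1 + a + b - c - of_nat m = \<beta> - \<gamma> - of_nat m - of_nat k" unfolding a_def b_def c_def by (simp add: algebra_simps)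
    show ?thesis unfolding hyp3F2_trunc_def tt_def e unfolding a_def b_def c_def by (simp add: mult_ac)
  qed
  have pa: "pochhammer (c - a) m = (-1)^m * pochhammer \<beta> m"
  proof -
    have "c - a = - (\<beta> + of_nat m - 1)" unfolding a_def c_def by (simp add: algebra_simps)
    then have "pochhammer (c - a) m = (-1)^m * pochhammer ((\<beta> + of_nat m - 1) - of_nat m + 1) m"
      by (simp only: pochhammer_minus)
    moreover have "(\<beta> + of_nat m - 1) - of_nat m + 1 = \<beta>" by simp
    ultimately show ?thesis by simp
  qed
  have pb: "pochhammer (c - b) m = pochhammer \<gamma> m" unfolding b_def c_def by simp
  have pc: "pochhammer c m = (-1)^m * pochhammer (1 + of_nat k) m"
  proof -
    have "c = - (of_nat (m + k))" unfolding c_def by simp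
    then have "pochhammer c m = (-1)^m * pochhammer (of_nat (m + k) - of_nat m + 1) m"
      by (simp only: pochhammer_minus)
    moreover have "(of_nat (m + k) - of_nat m + 1 :: complex) = 1 + of_nat k" by simp
    ultimately show ?thesis by (simp add: add.commute)
  qed
  have pe: "pochhammer (c - a - b) m = pochhammer (1 + of_nat k + \<gamma> - \<beta>) m"
  proof -
    have "c - a - b = 1 + of_nat k + \<gamma> - \<beta>" unfolding a_def b_def c_def by (simp add: algebra_simps)
    then show ?thesis by simp
  qed
  have n1: "((-1::complex)^m) \<noteq> 0" by simp
  show ?thesis unfolding S saal[OF h1 h2] pa pb pc pe using n1
    by (simp add: mult.assoc mult_divide_mult_cancel_left)
qed

end
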